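(* Let $\mathcal{H}=\mathcal{H}_1\otimes\mathcal{H}_2\otimes\mathcal{H}_3$ with $\dim\mathcal{H}_i=d_i$, and let $U\in SU(d_1d_2d_3)$ act on $\mathcal{H}$, with matrix elements $U^{j_1j_2j_3}_{j_{1'}j_{2'}j_{3'}}=\langle j_1j_2j_3|U|j_{1'}j_{2'}j_{3'}\rangle$ and $(U^\dagger)^{j_{1'}j_{2'}j_{3'}}_{j_1j_2j_3}=\langle j_{1'}j_{2'}j_{3'}|U^\dagger|j_1j_2j_3\rangle$ in a fixed product orthonormal basis. Then the entangling power with respect to one-tangle satisfies $$\epsilon_1(U)=\tfrac13\left[\epsilon_{12|3}(U)+\epsilon_{13|2}(U)+\epsilon_{23|1}(U)\right],$$ and for each bipartition $ab|c\in\{12|3,\,13|2,\,23|1\}$, $$\epsilon_{ab|c}(U)=2\Bigg[1-\Bigg(\prod_{i=1}^3\frac{1}{d_i(d_i+1)}\Bigg)\,u_{\vec r}\,u_{\vec s}\,u_{\vec t}\,f^{ab|c}_{\vec r,\vec s,\vec t}(U)\Bigg],$$ where for a four-component index vector $\vec v=(v_1,v_2,v_3,v_4)$ we set $u_{\vec v}=\delta^{v_1}_{v_2}\delta^{v_3}_{v_4}+\delta^{v_1}_{v_4}\delta^{v_3}_{v_2}$, and $$f^{ab|c}_{\vec r,\vec s,\vec t}(U)=\delta^{i_a}_{l_a}\delta^{i_b}_{l_b}\delta^{i_c}_{j_c}\delta^{k_a}_{j_a}\delta^{k_b}_{j_b}\delta^{k_c}_{l_c}\,U^{i_1i_2i_3}_{r_1s_1t_1}(U^\dagger)^{r_2s_2t_2}_{j_1j_2j_3}U^{k_1k_2k_3}_{r_3s_3t_3}(U^\dagger)^{r_4s_4t_4}_{l_1l_2l_3}.$$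 Here the Einstein summation convention is used: all repeated indices are summed, in particular over all $\vec r\in\{0,\dots,d_1-1\}^4$, $\vec s\in\{0,\dots,d_2-1\}^4$, $\vec t\in\{0,\dots,d_3-1\}^4$, and over $i_m,j_m,k_m,l_m\in\{0,\dots,d_m-1\}$ for $m=1,2,3$ (subscripts $a,b,c$ on $i,j,k,l$ refer to the party labels).
   Context: For a pure state $|\psi\rangle\in\mathcal{H}$ and a bipartition $g|g'$ of the parties $\{1,2,3\}$, the generalized concurrence is $\tau_{g|g'}(|\psi\rangle)=2\big(1-\operatorname{tr}[(\operatorname{tr}_g|\psi\rangle\langle\psi|)^2]\big)$. The one-tangle is $\tau_1(|\psi\rangle)=\frac13[\tau_{12|3}+\tau_{13|2}+\tau_{23|1}](|\psi\rangle)$. For a unitary $U$ on $\mathcal{H}$, $\epsilon_{ab|c}(U)$ denotes the average of $\tau_{ab|c}(U|\psi_{\rm sep}\rangle)$ and $\epsilon_1(U)$ the average of $\tau_1(U|\psi_{\rm sep}\rangle)$, where $|\psi_{\rm sep}\rangle=|\psi_1\rangle\otimes|\psi_2\rangle\otimes|\psi_3\rangle$ with each $|\psi_i\rangle$ drawn independently from the unitarily invariant (Haar) measure on pure states of $\mathcal{H}_i$. *)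

theory Defs
  imports "HOL-Probability.Probability"
begin

text \<open>Dimensions d_i are encoded as finite index types 'n1, 'n2, 'n3 with d_i = CARD('n_i).
  Vectors in H_i are complex^'n_i; H = H_1 (x) H_2 (x) H_3 has basis indexed by 'n1 * 'n2 * 'n3.
  Matrices: U $ row $ col, i.e. U $ j $ j' = <j|U|j'>.\<close>

definition adj :: "complex^'m^'n \<Rightarrow> complex^'n^'m" where
  "adj A = (\<chi> i j. cnj (A $ j $ i))"

definition unitary_mat :: "complex^'n^'n \<Rightarrow> bool" where
  "unitary_mat A \<longleftrightarrow> A ** adj A = mat 1 \<and> adj A ** A = mat 1"

definition special_unitary :: "complex^'n^'n \<Rightarrow> bool" where
  "special_unitary A \<longleftrightarrow> unitary_mat A \<and> det A = 1"

definition haar_state_measure :: "(complex^'n) measure \<Rightarrow> bool" where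
  "haar_state_measure M \<longleftrightarrow>
     prob_space M \<and> sets M = sets borel \<and>
     (AE x in M. norm x = 1) \<and>
     (\<forall>V :: complex^'n^'n. unitary_mat V \<longrightarrow> distr M borel (\<lambda>x. V *v x) = M)"

definition prod_state :: "complex^'n1 \<Rightarrow> complex^'n2 \<Rightarrow> complex^'n3 \<Rightarrow> complex^('n1::finite \<times> 'n2::finite \<times> 'n3::finite)" where
  "prod_state x y z = (\<chi> p. x $ fst p * y $ fst (snd p) * z $ snd (snd p))"

definition red1 :: "complex^('n1::finite \<times> 'n2::finite \<times> 'n3::finite) \<Rightarrow> 'n1 \<Rightarrow> 'n1 \<Rightarrow> complex" where
  "red1 \<psi> j j' = (\<Sum>b\<in>UNIV. \<Sum>c\<in>UNIV. \<psi> $ (j,b,c) * cnj (\<psi> $ (j',b,c)))"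
definition red2 :: "complex^('n1::finite \<times> 'n2::finite \<times> 'n3::finite) \<Rightarrow> 'n2 \<Rightarrow> 'n2 \<Rightarrow> complex" where
  "red2 \<psi> j j' = (\<Sum>a\<in>UNIV. \<Sum>c\<in>UNIV. \<psi> $ (a,j,c) * cnj (\<psi> $ (a,j',c)))"
definition red3 :: "complex^('n1::finite \<times> 'n2::finite \<times> 'n3::finite) \<Rightarrow> 'n3 \<Rightarrow> 'n3 \<Rightarrow> complex" where
  "red3 \<psi> j j' = (\<Sum>a\<in>UNIV. \<Sum>b\<in>UNIV. \<psi> $ (a,b,j) * cnj (\<psi> $ (a,b,j')))"

text \<open>tr[rho^2] for a matrix given as a function on a finite index type (real for Hermitian rho).\<close>
definition purity :: "('k::finite \<Rightarrow> 'k \<Rightarrow> complex) \<Rightarrow> real" where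
  "purity \<rho> = Re (\<Sum>j\<in>UNIV. \<Sum>j'\<in>UNIV. \<rho> j j' * \<rho> j' j)"

text \<open>Generalized concurrence tau_{ab|c}; the bipartition ab|c is encoded by c \<in> {1,2,3}
  (c = 3: 12|3, c = 2: 13|2, c = 1: 23|1).  tau_{g|g'} = 2(1 - tr[(tr_g rho)^2]).\<close>
definition tau_bip :: "nat \<Rightarrow> complex^('n1::finite \<times> 'n2::finite \<times> 'n3::finite) \<Rightarrow> real" where
  "tau_bip c \<psi> = 2 * (1 - (if c = 1 then purity (red1 \<psi>)
                             else if c = 2 then purity (red2 \<psi>) else purity (red3 \<psi>)))"

definition one_tangle :: "complex^('n1::finite \<times> 'n2::finite \<times> 'n3::finite) \<Rightarrow> real" where
  "one_tangle \<psi> = (tau_bip 3 \<psi> + tau_bip 2 \<psi> + tau_bip 1 \<psi>) / 3"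

definition eps_bip :: "(complex^'n1) measure \<Rightarrow> (complex^'n2) measure \<Rightarrow> (complex^'n3) measure
    \<Rightarrow> nat \<Rightarrow> complex^('n1::finite \<times> 'n2::finite \<times> 'n3::finite)^('n1 \<times> 'n2 \<times> 'n3) \<Rightarrow> real" where
  "eps_bip M1 M2 M3 c U =
     (\<integral>(x,y,z). tau_bip c (U *v prod_state x y z) \<partial>(M1 \<Otimes>\<^sub>M (M2 \<Otimes>\<^sub>M M3)))"

definition eps_one :: "(complex^'n1) measure \<Rightarrow> (complex^'n2) measure \<Rightarrow> (complex^'n3) measure
    \<Rightarrow> complex^('n1::finite \<times> 'n2::finite \<times> 'n3::finite)^('n1 \<times> 'n2 \<times> 'n3) \<Rightarrow> real" where
  "eps_one M1 M2 M3 U =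
     (\<integral>(x,y,z). one_tangle (U *v prod_state x y z) \<partial>(M1 \<Otimes>\<^sub>M (M2 \<Otimes>\<^sub>M M3)))"

definition kd :: "'a \<Rightarrow> 'a \<Rightarrow> complex" where
  "kd x y = (if x = y then 1 else 0)"

definition u_vec :: "'a \<times> 'a \<times> 'a \<times> 'a \<Rightarrow> complex" where
  "u_vec v = (case v of (v1,v2,v3,v4) \<Rightarrow> kd v1 v2 * kd v3 v4 + kd v1 v4 * kd v3 v2)"

text \<open>Delta factor of party m: if m = c then delta(i_m,j_m) delta(k_m,l_m),
  else (m in {a,b}) delta(i_m,l_m) delta(k_m,j_m).\<close>
definition pdelta :: "bool \<Rightarrow> 'a \<Rightarrow> 'a \<Rightarrow> 'a \<Rightarrow> 'a \<Rightarrow> complex" where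
  "pdelta isc i j k l = (if isc then kd i j * kd k l else kd i l * kd k j)"

definition f_bip :: "nat \<Rightarrow> complex^('n1::finite \<times> 'n2::finite \<times> 'n3::finite)^('n1 \<times> 'n2 \<times> 'n3)
   \<Rightarrow> 'n1 \<times> 'n1 \<times> 'n1 \<times> 'n1 \<Rightarrow> 'n2 \<times> 'n2 \<times> 'n2 \<times> 'n2 \<Rightarrow> 'n3 \<times> 'n3 \<times> 'n3 \<times> 'n3 \<Rightarrow> complex" where
  "f_bip c U r s t =
    (case (r, s, t) of ((r1,r2,r3,r4), (s1,s2,s3,s4), (t1,t2,t3,t4)) \<Rightarrow>
     (\<Sum>i\<in>UNIV. \<Sum>j\<in>UNIV. \<Sum>k\<in>UNIV. \<Sum>l\<in>UNIV.
        (case (i, j, k, l) of ((i1,i2,i3), (j1,j2,j3), (k1,k2,k3), (l1,l2,l3)) \<Rightarrow>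
          pdelta (c = 1) i1 j1 k1 l1 * pdelta (c = 2) i2 j2 k2 l2 * pdelta (c = 3) i3 j3 k3 l3)
        * U $ i $ (r1,s1,t1) * cnj (U $ j $ (r2,s2,t2))
        * U $ k $ (r3,s3,t3) * cnj (U $ l $ (r4,s4,t4))))"

end

theory Submission
  imports Defs
begin


lemma haar_basic:
  assumes "haar_state_measure M"
  shows "prob_space M" "sets M = sets borel" "space M = UNIV"
  using assms unfolding haar_state_measure_def by (auto dest: sets_eq_imp_space_eq)

lemma meas_M:
  assumes "haar_state_measure M" "f \<in> borel_measurable borel"
  shows "f \<in> borel_measurable M"
  using assms(2) measurable_cong_sets[OF haar_basic(2)[OF assms(1)] refl] by blast

lemma mono_meas: "(\<lambda>x::complex^'n. x$p * cnj(x$q) * x$r * cnj(x$s)) \<in> borel_measurable borel"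
  by (intro borel_measurable_continuous_onI continuous_intros)

lemma mono_int:
  assumes "haar_state_measure M"
  shows "integrable M (\<lambda>x::complex^'n. x$p * cnj(x$q) * x$r * cnj(x$s))"
proof -
  interpret prob_space M using haar_basic[OF assms] by simp
  have ae: "AE x in M. norm x = 1" using assms unfolding haar_state_measure_def by simp
  show ?thesis
  proof (rule integrable_const_bound[where B=1])
    show "AE x in M. norm (x$p * cnj(x$q) * x$r * cnj(x$s)) \<le> 1"
      using ae
    proof eventually_elim
      case (elim x)
      have h: "\<And>i. norm (x$i) \<le> 1" using Finite_Cartesian_Product.norm_nth_le[of x] elim by metis
      have "norm (x$p * cnj(x$q) * x$r * cnj(x$s)) = norm (x$p) * norm (x$q) * norm (x$r) * norm (x$s)"
        by (simp add: norm_mult)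
      also have "\<dots> \<le> 1 * 1 * 1 * 1"
        by (intro mult_mono h) auto
      finally show ?case by simp
    qed
    show "(\<lambda>x. x $ p * cnj (x $ q) * x $ r * cnj (x $ s)) \<in> borel_measurable M"
      by (rule meas_M[OF assms mono_meas])
  qed
qed

lemma haar_inv:
  assumes "haar_state_measure M" "unitary_mat V" "f \<in> borel_measurable borel"
  shows "(\<integral>x. f (V *v x) \<partial>M) = (\<integral>x. (f x :: complex) \<partial>M)"
proof -
  have d: "distr M borel (\<lambda>x. V *v x) = M" using assms unfolding haar_state_measure_def by blast
  have m: "(\<lambda>x. V *v x) \<in> measurable M borel"
    by (rule meas_M[OF assms(1)]) (intro borel_measurable_continuous_onI linear_continuous_on matrix_vector_mul_bounded_linear)
  show ?thesis
    by (subst d[symmetric]) (simp add: integral_distr[OF m assms(3)])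
qed

definition mom :: "(complex^'n) measure \<Rightarrow> 'n \<Rightarrow> 'n \<Rightarrow> 'n \<Rightarrow> 'n \<Rightarrow> complex" where
  "mom M p q r s = (\<integral>x. x$p * cnj(x$q) * x$r * cnj(x$s) \<partial>M)"

lemma mom_swap1: "mom M p q r s = mom M r q p s"
  unfolding mom_def by (simp add: mult_ac)
lemma mom_swap2: "mom M p q r s = mom M p s r q"
  unfolding mom_def by (simp add: mult_ac)

lemma mom_inv:
  assumes "haar_state_measure M" "unitary_mat V"
  shows "mom M p q r s = (\<Sum>k4\<in>UNIV. cnj (V$s$k4) * (\<Sum>k3\<in>UNIV. V$r$k3 * (\<Sum>k2\<in>UNIV. cnj (V$q$k2) *
            (\<Sum>k1\<in>UNIV. V$p$k1 * mom M k1 k2 k3 k4))))"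
proof -
  have pw: "(V *v x)$p * cnj((V *v x)$q) * (V *v x)$r * cnj((V *v x)$s) =
     (\<Sum>k4\<in>UNIV. \<Sum>k3\<in>UNIV. \<Sum>k2\<in>UNIV. \<Sum>k1\<in>UNIV. (V$p$k1 * (cnj (V$q$k2) * (V$r$k3 * cnj (V$s$k4)))) *
        (x$k1 * cnj(x$k2) * x$k3 * cnj(x$k4)))" for x
  proof -
    have e: "(V *v x)$i = (\<Sum>k\<in>UNIV. V$i$k * x$k)" for i by (simp add: matrix_vector_mult_def)
    show ?thesis
      by (simp only: e cnj_sum complex_cnj_mult sum_distrib_left sum_distrib_right) (simp add: ac_simps)
  qed
  have "mom M p q r s = (\<integral>x. (V *v x)$p * cnj((V *v x)$q) * (V *v x)$r * cnj((V *v x)$s) \<partial>M)"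
    unfolding mom_def
    by (rule haar_inv[OF assms mono_meas, symmetric])
  also have "\<dots> = (\<Sum>k4\<in>UNIV. \<Sum>k3\<in>UNIV. \<Sum>k2\<in>UNIV. \<Sum>k1\<in>UNIV. (V$p$k1 * (cnj (V$q$k2) * (V$r$k3 * cnj (V$s$k4)))) *
        mom M k1 k2 k3 k4)"
    unfolding pw mom_def
    by (simp add: integrable_sum mono_int[OF assms(1)])
  also have "\<dots> = (\<Sum>k4\<in>UNIV. cnj (V$s$k4) * (\<Sum>k3\<in>UNIV. V$r$k3 * (\<Sum>k2\<in>UNIV. cnj (V$q$k2) *
            (\<Sum>k1\<in>UNIV. V$p$k1 * mom M k1 k2 k3 k4))))"
    by (simp add: sum_distrib_left mult_ac)
  finally show ?thesis .
qed

lemma ifz_mult: "(if P then a else 0) * (b::'a::mult_zero) = (if P then a * b else 0)"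
  by simp

lemma ifz_mult2: "(b::'a::mult_zero) * (if P then a else 0) = (if P then b * a else 0)"
  by simp
lemma cnj_ifz: "cnj (if P then a else 0) = (if P then cnj a else 0)"
  by simp

definition ph :: "'n \<Rightarrow> 'n \<Rightarrow> complex" where "ph p q = (if q = p then \<i> else 1)"

definition phmat :: "'n \<Rightarrow> complex^'n^'n" where
  "phmat p = (\<chi> i j. if i = j then ph p i else 0)"

lemma phmat_unitary: "unitary_mat (phmat p)"
proof -
  have n: "ph p i * cnj (ph p i) = 1" "cnj (ph p i) * ph p i = 1" for i
    by (auto simp: ph_def)
  show ?thesis
    unfolding unitary_mat_def
    by (auto simp add: matrix_matrix_mult_def adj_def phmat_def mat_def vec_eq_iff ifz_mult ifz_mult2 cnj_ifz n)
qed

lemma mom_phase: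
  assumes "haar_state_measure M"
  shows "mom M a b c e = ph p a * cnj (ph p b) * ph p c * cnj (ph p e) * mom M a b c e"
proof -
  have "mom M a b c e = (\<Sum>k4\<in>UNIV. cnj ((phmat p)$e$k4) * (\<Sum>k3\<in>UNIV. (phmat p)$c$k3 * (\<Sum>k2\<in>UNIV. cnj ((phmat p)$b$k2) *
            (\<Sum>k1\<in>UNIV. (phmat p)$a$k1 * mom M k1 k2 k3 k4))))"
    by (rule mom_inv[OF assms phmat_unitary])
  also have "\<dots> = ph p a * cnj (ph p b) * ph p c * cnj (ph p e) * mom M a b c e"
    by (simp add: phmat_def if_distrib if_distribR sum.delta mult_ac cong: if_cong)
  finally show ?thesis .
qed

lemma mom_zero:
  assumes "haar_state_measure M" "\<not> ((a = b \<and> c = e) \<or> (a = e \<and> c = b))"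
  shows "mom M a b c e = 0"
proof (rule ccontr)
  assume nz: "mom M a b c e \<noteq> 0"
  have "ph p a * cnj (ph p b) * ph p c * cnj (ph p e) = 1" for p
    using mom_phase[OF assms(1), of a b c e p] nz
    by (metis mult_cancel_right2)
  from this[of a] this[of c] assms(2) show False
    by (auto simp: ph_def split: if_splits)
qed

lemma sum_two:
  assumes "a \<noteq> b" "\<And>k. k \<noteq> a \<Longrightarrow> k \<noteq> b \<Longrightarrow> f k = 0"
  shows "sum f (UNIV::'a::finite set) = f a + f b"
proof -
  have "sum f UNIV = sum f {a,b}"
    by (intro sum.mono_neutral_right) (use assms(2) in auto)
  then show ?thesis using assms(1) by simp
qed

definition sq :: complex where "sq = complex_of_real (1 / sqrt 2)"

lemma sq_sq: "sq * sq = 1/2"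
  unfolding sq_def by (simp flip: of_real_mult)

lemma cnj_sq: "cnj sq = sq" unfolding sq_def by simp

definition rot :: "'n \<Rightarrow> 'n \<Rightarrow> complex^'n^'n" where
  "rot a b = (\<chi> i j. if i \<in> {a,b} \<and> j \<in> {a,b} then (if i = b \<and> j = b then - sq else sq)
      else (if i = j then 1 else 0))"

lemma rot_adj: "adj (rot a b) = rot a b"
  by (auto simp: adj_def rot_def vec_eq_iff cnj_sq)

lemma rot_sq:
  assumes "a \<noteq> b"
  shows "rot a b ** rot a b = mat 1"
proof -
  have "(\<Sum>k\<in>UNIV. rot a b $ i $ k * rot a b $ k $ j) = (if i = j then 1 else 0)" for i j
  proof (cases "i \<in> {a,b} \<and> j \<in> {a,b}")
    case True
    have "(\<Sum>k\<in>UNIV. rot a b $ i $ k * rot a b $ k $ j) = rot a b $ i $ a * rot a b $ a $ j + rot a b $ i $ b * rot a b $ b $ j"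
      using sum_two[OF assms, of "\<lambda>k. rot a b $ i $ k * rot a b $ k $ j"] True by (auto simp: rot_def)
    then show ?thesis using True assms by (auto simp: rot_def sq_sq)
  next
    case False
    then show ?thesis
      by (auto simp: rot_def ifz_mult ifz_mult2 cong: if_cong)
  qed
  then show ?thesis by (simp add: matrix_matrix_mult_def mat_def vec_eq_iff)
qed

lemma rot_unitary: "a \<noteq> b \<Longrightarrow> unitary_mat (rot a b)"
  unfolding unitary_mat_def rot_adj by (simp add: rot_sq)

lemma rot_rows:
  assumes "a \<noteq> b"
  shows "(\<Sum>k\<in>UNIV. rot a b $ a $ k * g k) = sq * g a + sq * g b"
    "(\<Sum>k\<in>UNIV. cnj (rot a b $ a $ k) * g k) = sq * g a + sq * g b"
    "(\<Sum>k\<in>UNIV. rot a b $ b $ k * g k) = sq * g a - sq * g b"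
    "(\<Sum>k\<in>UNIV. cnj (rot a b $ b $ k) * g k) = sq * g a - sq * g b"
  using assms by (subst sum_two[OF assms]; auto simp: rot_def cnj_sq)+

lemma mom_rot:
  assumes "haar_state_measure M" "a \<noteq> b"
  shows "4 * mom M a a a a = mom M a a a a + mom M b b b b + 4 * mom M a a b b"
    "4 * mom M b b b b = mom M a a a a + mom M b b b b + 4 * mom M a a b b"
proof -
  have z: "mom M a b a b = 0" "mom M b a b a = 0" "mom M a a a b = 0" "mom M a a b a = 0"
     "mom M a b a a = 0" "mom M b a a a = 0" "mom M b b b a = 0" "mom M b b a b = 0"
     "mom M b a b b = 0" "mom M a b b b = 0"
    using assms by (auto intro!: mom_zero)
  have s: "mom M b b a a = mom M a a b b" "mom M a b b a = mom M a a b b" "mom M b a a b = mom M a a b b"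
    by (metis mom_swap1 mom_swap2)+
  have q: "sq * sq = 1/2" by (rule sq_sq)
  have "mom M a a a a = (\<Sum>k4\<in>UNIV. cnj ((rot a b)$a$k4) * (\<Sum>k3\<in>UNIV. (rot a b)$a$k3 * (\<Sum>k2\<in>UNIV. cnj ((rot a b)$a$k2) *
            (\<Sum>k1\<in>UNIV. (rot a b)$a$k1 * mom M k1 k2 k3 k4))))"
    by (rule mom_inv[OF assms(1) rot_unitary[OF assms(2)]])
  also have "\<dots> = sq * sq * (sq * sq) * (mom M a a a a + mom M b b b b + 4 * mom M a a b b)"
    by (simp only: rot_rows[OF assms(2)]) (simp add: z s algebra_simps)
  finally show "4 * mom M a a a a = mom M a a a a + mom M b b b b + 4 * mom M a a b b"
    unfolding q by simp
  have "mom M b b b b = (\<Sum>k4\<in>UNIV. cnj ((rot a b)$b$k4) * (\<Sum>k3\<in>UNIV. (rot a b)$b$k3 * (\<Sum>k2\<in>UNIV. cnj ((rot a b)$b$k2) *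
            (\<Sum>k1\<in>UNIV. (rot a b)$b$k1 * mom M k1 k2 k3 k4))))"
    by (rule mom_inv[OF assms(1) rot_unitary[OF assms(2)]])
  also have "\<dots> = sq * sq * (sq * sq) * (mom M a a a a + mom M b b b b + 4 * mom M a a b b)"
    by (simp only: rot_rows[OF assms(2)]) (simp add: z s algebra_simps)
  finally show "4 * mom M b b b b = mom M a a a a + mom M b b b b + 4 * mom M a a b b"
    unfolding q by simp
qed

lemma mom_norm:
  assumes "haar_state_measure M"
  shows "(\<Sum>p\<in>UNIV. \<Sum>q\<in>UNIV. mom M p p q q) = 1"
proof -
  interpret prob_space M using haar_basic[OF assms] by simp
  have ae: "AE x in M. norm x = 1" using assms unfolding haar_state_measure_def by simp
  have "(\<Sum>p\<in>UNIV. \<Sum>q\<in>UNIV. mom M p p q q) =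
        (\<integral>x. (\<Sum>p\<in>UNIV. \<Sum>q\<in>UNIV. x$p * cnj(x$p) * x$q * cnj(x$q)) \<partial>M)"
    unfolding mom_def by (simp add: integrable_sum mono_int[OF assms])
  also have "\<dots> = (\<integral>x. 1 \<partial>M)"
  proof (rule integral_cong_AE)
    show "(\<lambda>x. \<Sum>p\<in>UNIV. \<Sum>q\<in>UNIV. x$p * cnj(x$p) * x$q * cnj(x$q)) \<in> borel_measurable M"
      by (rule meas_M[OF assms]) (intro borel_measurable_continuous_onI continuous_intros)
    show "(\<lambda>x. 1::complex) \<in> borel_measurable M" by simp
    show "AE x in M. (\<Sum>p\<in>UNIV. \<Sum>q\<in>UNIV. x$p * cnj(x$p) * x$q * cnj(x$q)) = 1"
      using ae
    proof eventually_elim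
      case (elim x)
      have n2: "(\<Sum>p\<in>UNIV. (norm (x$p))^2) = 1"
        using elim unfolding norm_vec_def L2_set_def
        by (metis one_power2 real_sqrt_eq_1_iff)
      have s1: "(\<Sum>p\<in>UNIV. x$p * cnj(x$p)) = 1"
      proof -
        have "(\<Sum>p\<in>UNIV. x$p * cnj(x$p)) = (\<Sum>p\<in>UNIV. complex_of_real ((norm (x$p))^2))"
          by (simp only: complex_norm_square)
        also have "\<dots> = 1" by (simp only: of_real_sum[symmetric] n2) simp
        finally show ?thesis .
      qed
      have "(\<Sum>p\<in>UNIV. \<Sum>q\<in>UNIV. x$p * cnj(x$p) * x$q * cnj(x$q)) =
            (\<Sum>p\<in>UNIV. x$p * cnj(x$p)) * (\<Sum>q\<in>UNIV. x$q * cnj(x$q))"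
        by (simp add: sum_product mult.assoc)
      then show ?case using s1 by simp
    qed
  qed
  also have "\<dots> = 1" by (simp add: prob_space)
  finally show ?thesis .
qed

lemma mom_formula:
  fixes M :: "(complex^'n) measure"
  assumes "haar_state_measure M"
  shows "mom M p q r s = u_vec (p,q,r,s) / (of_nat CARD('n) * (of_nat CARD('n) + 1))"
proof -
  define A where "A = mom M (undefined::'n) undefined undefined undefined"
  have hA: "mom M p p p p = A" for p
  proof (cases "p = undefined")
    case False
    from mom_rot[OF assms False] show ?thesis unfolding A_def by algebra
  qed (simp add: A_def)
  have hB: "2 * mom M p p q q = A" if "p \<noteq> q" for p q
    using mom_rot[OF assms that] hA[of p] hA[of q] by algebra
  have hB2: "mom M p p q q = A/2" if "p \<noteq> q" for p q
  proof -
    have "mom M p p q q = (2 * mom M p p q q) / 2" by simp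
    then show ?thesis using hB[OF that] by simp
  qed
  have hpq: "mom M p p q q = (A/2) * (1 + kd p q)" for p q
    using hA[of p] hB2[of p q] by (cases "p = q") (auto simp: kd_def)
  have "1 = (\<Sum>p\<in>UNIV. \<Sum>q\<in>UNIV. mom M p p q q)" using mom_norm[OF assms] by simp
  also have "\<dots> = (\<Sum>p\<in>UNIV. \<Sum>q\<in>UNIV. (A/2) * (1 + kd (p::'n) q))" by (simp only: hpq)
  also have "\<dots> = (A/2) * (\<Sum>p\<in>UNIV. \<Sum>q\<in>UNIV. (1 + kd (p::'n) q))" by (simp add: sum_distrib_left)
  also have "\<dots> = (A/2) * (\<Sum>p\<in>(UNIV::'n set). (of_nat CARD('n) + 1))"
  proof -
    have kds: "(\<Sum>q\<in>UNIV. kd p q) = (1::complex)" for p::'n by (simp add: kd_def)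
    show ?thesis by (simp add: sum.distrib kds)
  qed
  also have "\<dots> = (A/2) * (of_nat CARD('n) * (of_nat CARD('n) + 1))" by simp
  finally have k0: "1 = (A/2) * (of_nat CARD('n) * (of_nat CARD('n) + 1))" .
  have dnz: "(of_nat CARD('n) * (of_nat CARD('n) + 1) :: complex) \<noteq> 0"
  proof -
    have "(of_nat CARD('n) * (of_nat CARD('n) + 1) :: complex) = of_nat (CARD('n) * (CARD('n)+1))" by (simp add: algebra_simps)
    moreover have "CARD('n) * (CARD('n)+1) \<noteq> 0" by simp
    ultimately show ?thesis by (metis of_nat_eq_0_iff)
  qed
  have k: "A/2 = 1 / (of_nat CARD('n) * (of_nat CARD('n) + 1))"
    using k0 dnz by (metis nonzero_mult_div_cancel_right)
  show ?thesis
  proof (cases "(p = q \<and> r = s) \<or> (p = s \<and> r = q)")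
    case True
    then show ?thesis
    proof
      assume "p = q \<and> r = s"
      then show ?thesis using hpq[of p r] k by (auto simp: u_vec_def kd_def)
    next
      assume h: "p = s \<and> r = q"
      have "mom M p q r s = mom M p p r r" using h mom_swap2 by metis
      then show ?thesis using h hpq[of p r] k by (auto simp: u_vec_def kd_def)
    qed
  next
    case False
    then show ?thesis using mom_zero[OF assms False] by (auto simp: u_vec_def kd_def)
  qed
qed



lemma pair_int:
  fixes f :: "'a \<Rightarrow> complex" and g :: "'b \<Rightarrow> complex"
  assumes "prob_space M1" "prob_space M2" "integrable M1 f" "integrable M2 g"
  shows "integrable (M1 \<Otimes>\<^sub>M M2) (\<lambda>p. f (fst p) * g (snd p))"
    "(\<integral>p. f (fst p) * g (snd p) \<partial>(M1 \<Otimes>\<^sub>M M2)) = integral\<^sup>L M1 f * integral\<^sup>L M2 g"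
proof -
  interpret P: pair_sigma_finite M1 M2
    by (simp add: pair_sigma_finite_def prob_space_imp_sigma_finite assms(1,2))
  have [measurable]: "f \<in> borel_measurable M1" "g \<in> borel_measurable M2"
    using assms(3,4) by (simp_all add: borel_measurable_integrable)
  show i: "integrable (M1 \<Otimes>\<^sub>M M2) (\<lambda>p. f (fst p) * g (snd p))"
  proof (rule P.Fubini_integrable)
    show "(\<lambda>p. f (fst p) * g (snd p)) \<in> borel_measurable (M1 \<Otimes>\<^sub>M M2)" by measurable
    have "integrable M1 (\<lambda>x. norm (f x) * (\<integral>y. norm (g y) \<partial>M2))"
      using assms(3) by (intro integrable_mult_left integrable_norm)
    then show "integrable M1 (\<lambda>x. \<integral>y. norm (f (fst (x, y)) * g (snd (x, y))) \<partial>M2)"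
      by (simp add: norm_mult)
    show "AE x in M1. integrable M2 (\<lambda>y. f (fst (x, y)) * g (snd (x, y)))"
      using assms(4) by (intro AE_I2) simp
  qed
  have "(\<integral>p. f (fst p) * g (snd p) \<partial>(M1 \<Otimes>\<^sub>M M2)) = (\<integral>x. (\<integral>y. f x * g y \<partial>M2) \<partial>M1)"
    using P.integral_fst'[OF i] by simp
  also have "\<dots> = integral\<^sup>L M1 f * integral\<^sup>L M2 g"
    by (simp add: integral_mult_left_zero)
  finally show "(\<integral>p. f (fst p) * g (snd p) \<partial>(M1 \<Otimes>\<^sub>M M2)) = integral\<^sup>L M1 f * integral\<^sup>L M2 g" .
qed

lemma sum_UNIV_prod: "(\<Sum>p\<in>(UNIV::('a::finite \<times> 'b::finite) set). f p) = (\<Sum>a\<in>UNIV. \<Sum>b\<in>UNIV. f (a,b))"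
  by (simp add: sum.cartesian_product UNIV_Times_UNIV[symmetric] del: UNIV_Times_UNIV)

lemma in2: "(\<Sum>x\<in>A. \<Sum>a\<in>B. \<Sum>b\<in>C. f x a b) = (\<Sum>a\<in>B. \<Sum>b\<in>C. \<Sum>x\<in>A. f x a b)"
  by (subst sum.swap) (rule sum.cong[OF refl], rule sum.swap)

lemma in4: "(\<Sum>x\<in>A. \<Sum>a\<in>B. \<Sum>b\<in>C. \<Sum>c\<in>D. \<Sum>d\<in>E. f x a b c d) =
    (\<Sum>a\<in>B. \<Sum>b\<in>C. \<Sum>c\<in>D. \<Sum>d\<in>E. \<Sum>x\<in>A. f x a b c d)"
  by (subst in2) (rule sum.cong[OF refl], rule sum.cong[OF refl], rule in2)

definition Jf :: "nat \<Rightarrow> 'a \<times> 'b \<times> 'c \<Rightarrow> 'a \<times> 'b \<times> 'c \<Rightarrow> 'a \<times> 'b \<times> 'c" where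
  "Jf c i k = (if c = 1 then fst i else fst k, if c = 2 then fst (snd i) else fst (snd k),
               if c = 3 then snd (snd i) else snd (snd k))"
definition Lf :: "nat \<Rightarrow> 'a \<times> 'b \<times> 'c \<Rightarrow> 'a \<times> 'b \<times> 'c \<Rightarrow> 'a \<times> 'b \<times> 'c" where
  "Lf c i k = (if c = 1 then fst k else fst i, if c = 2 then fst (snd k) else fst (snd i),
               if c = 3 then snd (snd k) else snd (snd i))"

definition Tq :: "nat \<Rightarrow> complex^('n1::finite \<times> 'n2::finite \<times> 'n3::finite) \<Rightarrow> complex" where
  "Tq c \<psi> = (\<Sum>i\<in>UNIV. \<Sum>k\<in>UNIV. \<psi>$i * cnj (\<psi>$(Jf c i k)) * \<psi>$k * cnj (\<psi>$(Lf c i k)))"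

lemma pur3: "(\<Sum>j\<in>UNIV. \<Sum>j'\<in>UNIV. red3 \<psi> j j' * red3 \<psi> j' j) = Tq 3 \<psi>"
proof -
  have "(\<Sum>j\<in>UNIV. \<Sum>j'\<in>UNIV. red3 \<psi> j j' * red3 \<psi> j' j) =
    (\<Sum>j\<in>UNIV. \<Sum>j'\<in>UNIV. \<Sum>a\<in>UNIV. \<Sum>b\<in>UNIV. \<Sum>a'\<in>UNIV. \<Sum>b'\<in>UNIV.
       \<psi>$(a,b,j) * cnj (\<psi>$(a,b,j')) * (\<psi>$(a',b',j') * cnj (\<psi>$(a',b',j))))"
    unfolding red3_def by (simp only: sum_distrib_right) (simp only: sum_distrib_left)
  also have "\<dots> = (\<Sum>j\<in>UNIV. \<Sum>a\<in>UNIV. \<Sum>b\<in>UNIV. \<Sum>a'\<in>UNIV. \<Sum>b'\<in>UNIV. \<Sum>j'\<in>UNIV.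
       \<psi>$(a,b,j) * cnj (\<psi>$(a,b,j')) * (\<psi>$(a',b',j') * cnj (\<psi>$(a',b',j))))"
    by (rule sum.cong[OF refl], rule in4)
  also have "\<dots> = (\<Sum>a\<in>UNIV. \<Sum>b\<in>UNIV. \<Sum>j\<in>UNIV. \<Sum>a'\<in>UNIV. \<Sum>b'\<in>UNIV. \<Sum>j'\<in>UNIV.
       \<psi>$(a,b,j) * cnj (\<psi>$(a,b,j')) * (\<psi>$(a',b',j') * cnj (\<psi>$(a',b',j))))"
    by (rule in2)
  also have "\<dots> = Tq 3 \<psi>"
    by (simp add: Tq_def Jf_def Lf_def sum_UNIV_prod mult_ac)
  finally show ?thesis .
qed

lemma pur1: "(\<Sum>j\<in>UNIV. \<Sum>j'\<in>UNIV. red1 \<psi> j j' * red1 \<psi> j' j) = Tq 1 \<psi>"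
proof -
  have "(\<Sum>j\<in>UNIV. \<Sum>j'\<in>UNIV. red1 \<psi> j j' * red1 \<psi> j' j) =
    (\<Sum>j\<in>UNIV. \<Sum>j'\<in>UNIV. \<Sum>b\<in>UNIV. \<Sum>c\<in>UNIV. \<Sum>b'\<in>UNIV. \<Sum>c'\<in>UNIV.
       \<psi>$(j,b,c) * cnj (\<psi>$(j',b,c)) * (\<psi>$(j',b',c') * cnj (\<psi>$(j,b',c'))))"
    unfolding red1_def by (simp only: sum_distrib_right) (simp only: sum_distrib_left)
  also have "\<dots> = (\<Sum>j\<in>UNIV. \<Sum>b\<in>UNIV. \<Sum>c\<in>UNIV. \<Sum>j'\<in>UNIV. \<Sum>b'\<in>UNIV. \<Sum>c'\<in>UNIV.
       \<psi>$(j,b,c) * cnj (\<psi>$(j',b,c)) * (\<psi>$(j',b',c') * cnj (\<psi>$(j,b',c'))))"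
    by (rule sum.cong[OF refl], rule in2)
  also have "\<dots> = Tq 1 \<psi>"
    by (simp add: Tq_def Jf_def Lf_def sum_UNIV_prod mult_ac)
  finally show ?thesis .
qed

lemma pur2: "(\<Sum>j\<in>UNIV. \<Sum>j'\<in>UNIV. red2 \<psi> j j' * red2 \<psi> j' j) = Tq 2 \<psi>"
proof -
  have "(\<Sum>j\<in>UNIV. \<Sum>j'\<in>UNIV. red2 \<psi> j j' * red2 \<psi> j' j) =
    (\<Sum>j\<in>UNIV. \<Sum>j'\<in>UNIV. \<Sum>a\<in>UNIV. \<Sum>c\<in>UNIV. \<Sum>a'\<in>UNIV. \<Sum>c'\<in>UNIV.
       \<psi>$(a,j,c) * cnj (\<psi>$(a,j',c)) * (\<psi>$(a',j',c') * cnj (\<psi>$(a',j,c'))))"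
    unfolding red2_def by (simp only: sum_distrib_right) (simp only: sum_distrib_left)
  also have "\<dots> = (\<Sum>j\<in>UNIV. \<Sum>a\<in>UNIV. \<Sum>c\<in>UNIV. \<Sum>j'\<in>UNIV. \<Sum>a'\<in>UNIV. \<Sum>c'\<in>UNIV.
       \<psi>$(a,j,c) * cnj (\<psi>$(a,j',c)) * (\<psi>$(a',j',c') * cnj (\<psi>$(a',j,c'))))"
    by (rule sum.cong[OF refl], rule in2)
  also have "\<dots> = (\<Sum>j\<in>UNIV. \<Sum>a\<in>UNIV. \<Sum>c\<in>UNIV. \<Sum>a'\<in>UNIV. \<Sum>j'\<in>UNIV. \<Sum>c'\<in>UNIV.
       \<psi>$(a,j,c) * cnj (\<psi>$(a,j',c)) * (\<psi>$(a',j',c') * cnj (\<psi>$(a',j,c'))))"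
    by (rule sum.cong[OF refl], rule sum.cong[OF refl], rule sum.cong[OF refl], rule sum.swap)
  also have "\<dots> = (\<Sum>a\<in>UNIV. \<Sum>j\<in>UNIV. \<Sum>c\<in>UNIV. \<Sum>a'\<in>UNIV. \<Sum>j'\<in>UNIV. \<Sum>c'\<in>UNIV.
       \<psi>$(a,j,c) * cnj (\<psi>$(a,j',c)) * (\<psi>$(a',j',c') * cnj (\<psi>$(a',j,c'))))"
    by (rule sum.swap)
  also have "\<dots> = Tq 2 \<psi>"
    by (simp add: Tq_def Jf_def Lf_def sum_UNIV_prod mult_ac)
  finally show ?thesis .
qed

lemma purity_real:
  assumes "\<And>j j'. \<rho> j' j = cnj (\<rho> j j')"
  shows "complex_of_real (purity \<rho>) = (\<Sum>j\<in>UNIV. \<Sum>j'\<in>UNIV. \<rho> j j' * \<rho> j' j)"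
proof -
  have "(\<Sum>j\<in>UNIV. \<Sum>j'\<in>UNIV. \<rho> j j' * \<rho> j' j) = (\<Sum>j\<in>UNIV. \<Sum>j'\<in>UNIV. complex_of_real ((norm (\<rho> j j'))^2))"
  proof -
    have "\<rho> j j' * \<rho> j' j = complex_of_real ((norm (\<rho> j j'))^2)" for j j'
      by (subst assms) (simp only: complex_norm_square)
    then show ?thesis by simp
  qed
  also have "\<dots> = complex_of_real (\<Sum>j\<in>UNIV. \<Sum>j'\<in>UNIV. (norm (\<rho> j j'))^2)" by simp
  finally show ?thesis unfolding purity_def by simp
qed

lemma red_herm:
  "red1 \<psi> j' j = cnj (red1 \<psi> j j')" "red2 \<psi> j' j = cnj (red2 \<psi> j j')" "red3 \<psi> j' j = cnj (red3 \<psi> j j')"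
  by (simp_all add: red1_def red2_def red3_def cnj_sum mult.commute)

lemma tau_T:
  assumes "c \<in> {1,2,3}"
  shows "complex_of_real (tau_bip c \<psi>) = 2 * (1 - Tq c \<psi>)"
proof -
  have "complex_of_real (if c = 1 then purity (red1 \<psi>) else if c = 2 then purity (red2 \<psi>) else purity (red3 \<psi>)) = Tq c \<psi>"
  proof -
    have p1: "complex_of_real (purity (red1 \<psi>)) = Tq 1 \<psi>"
      proof -
      have h: "\<And>j j'. red1 \<psi> j' j = cnj (red1 \<psi> j j')" by (simp add: red1_def cnj_sum mult.commute)
      show ?thesis using purity_real[of "red1 \<psi>", OF h] pur1[of \<psi>] by simp
    qed
    have p2: "complex_of_real (purity (red2 \<psi>)) = Tq 2 \<psi>"
      proof -
      have h: "\<And>j j'. red2 \<psi> j' j = cnj (red2 \<psi> j j')" by (simp add: red2_def cnj_sum mult.commute)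
      show ?thesis using purity_real[of "red2 \<psi>", OF h] pur2[of \<psi>] by simp
    qed
    have p3: "complex_of_real (purity (red3 \<psi>)) = Tq 3 \<psi>"
      proof -
      have h: "\<And>j j'. red3 \<psi> j' j = cnj (red3 \<psi> j j')" by (simp add: red3_def cnj_sum mult.commute)
      show ?thesis using purity_real[of "red3 \<psi>", OF h] pur3[of \<psi>] by simp
    qed
    show ?thesis using assms p1 p2 p3 by auto
  qed
  then show ?thesis unfolding tau_bip_def by simp
qed

definition Wt :: "nat \<Rightarrow> complex^('n1::finite \<times> 'n2::finite \<times> 'n3::finite)^('n1 \<times> 'n2 \<times> 'n3) \<Rightarrow>
   'n1 \<times> 'n2 \<times> 'n3 \<Rightarrow> 'n1 \<times> 'n2 \<times> 'n3 \<Rightarrow> 'n1 \<times> 'n2 \<times> 'n3 \<Rightarrow> 'n1 \<times> 'n2 \<times> 'n3 \<Rightarrow> 'n1 \<times> 'n2 \<times> 'n3 \<Rightarrow> 'n1 \<times> 'n2 \<times> 'n3 \<Rightarrow> complex" where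
  "Wt c U i k R1 R2 R3 R4 = U$i$R1 * cnj (U$(Jf c i k)$R2) * U$k$R3 * cnj (U$(Lf c i k)$R4)"

definition Xm :: "complex^'m \<Rightarrow> 'm \<Rightarrow> 'm \<Rightarrow> 'm \<Rightarrow> 'm \<Rightarrow> complex" where
  "Xm X R1 R2 R3 R4 = X$R1 * cnj (X$R2) * X$R3 * cnj (X$R4)"

lemma Tq_expand:
  "Tq c (U *v X) = (\<Sum>i\<in>UNIV. \<Sum>k\<in>UNIV. \<Sum>R4\<in>UNIV. \<Sum>R3\<in>UNIV. \<Sum>R2\<in>UNIV. \<Sum>R1\<in>UNIV.
       Wt c U i k R1 R2 R3 R4 * Xm X R1 R2 R3 R4)"
proof -
  have e: "(U *v X)$i = (\<Sum>k\<in>UNIV. U$i$k * X$k)" for i by (simp add: matrix_vector_mult_def)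
  have "(U *v X)$i * cnj ((U *v X)$j) * (U *v X)$k * cnj ((U *v X)$l) =
     (\<Sum>R4\<in>UNIV. \<Sum>R3\<in>UNIV. \<Sum>R2\<in>UNIV. \<Sum>R1\<in>UNIV.
       (U$i$R1 * cnj (U$j$R2) * U$k$R3 * cnj (U$l$R4)) * Xm X R1 R2 R3 R4)" for i j k l
    unfolding Xm_def
    by (simp only: e cnj_sum complex_cnj_mult sum_distrib_left sum_distrib_right) (simp add: ac_simps)
  then show ?thesis unfolding Tq_def Wt_def by simp
qed

lemma Xm_prod:
  "Xm (prod_state x y z) R1 R2 R3 R4 =
    (x$fst R1 * cnj (x$fst R2) * x$fst R3 * cnj (x$fst R4)) *
    ((y$fst (snd R1) * cnj (y$fst (snd R2)) * y$fst (snd R3) * cnj (y$fst (snd R4))) *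
     (z$snd (snd R1) * cnj (z$snd (snd R2)) * z$snd (snd R3) * cnj (z$snd (snd R4))))"
  unfolding Xm_def prod_state_def by (simp add: ac_simps)

lemma Xm_int:
  fixes M1 :: "(complex^'n1::finite) measure" and M2 :: "(complex^'n2::finite) measure"
    and M3 :: "(complex^'n3::finite) measure"
  assumes h1: "haar_state_measure M1" and h2: "haar_state_measure M2" and h3: "haar_state_measure M3"
  shows "integrable (M1 \<Otimes>\<^sub>M (M2 \<Otimes>\<^sub>M M3)) (\<lambda>p. Xm (prod_state (fst p) (fst (snd p)) (snd (snd p))) R1 R2 R3 R4)"
    "(\<integral>p. Xm (prod_state (fst p) (fst (snd p)) (snd (snd p))) R1 R2 R3 R4 \<partial>(M1 \<Otimes>\<^sub>M (M2 \<Otimes>\<^sub>M M3))) =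
      mom M1 (fst R1) (fst R2) (fst R3) (fst R4) * mom M2 (fst (snd R1)) (fst (snd R2)) (fst (snd R3)) (fst (snd R4))
      * mom M3 (snd (snd R1)) (snd (snd R2)) (snd (snd R3)) (snd (snd R4))"
proof -
  have p1: "prob_space M1" and p2: "prob_space M2" and p3: "prob_space M3"
    using haar_basic h1 h2 h3 by blast+
  note i23 = pair_int[OF p2 p3 mono_int[OF h2] mono_int[OF h3]]
  note i = pair_int[OF p1 prob_space_pair[OF p2 p3] mono_int[OF h1] i23(1)]
  show "integrable (M1 \<Otimes>\<^sub>M (M2 \<Otimes>\<^sub>M M3)) (\<lambda>p. Xm (prod_state (fst p) (fst (snd p)) (snd (snd p))) R1 R2 R3 R4)"
    unfolding Xm_prod by (rule i(1))
  show "(\<integral>p. Xm (prod_state (fst p) (fst (snd p)) (snd (snd p))) R1 R2 R3 R4 \<partial>(M1 \<Otimes>\<^sub>M (M2 \<Otimes>\<^sub>M M3))) =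
      mom M1 (fst R1) (fst R2) (fst R3) (fst R4) * mom M2 (fst (snd R1)) (fst (snd R2)) (fst (snd R3)) (fst (snd R4))
      * mom M3 (snd (snd R1)) (snd (snd R2)) (snd (snd R3)) (snd (snd R4))"
    unfolding Xm_prod i(2) i23(2) mom_def by (simp add: mult.assoc)
qed

lemma D_eq:
  "(case (i, j, k, l) of ((i1,i2,i3), (j1,j2,j3), (k1,k2,k3), (l1,l2,l3)) \<Rightarrow>
          pdelta (c = 1) i1 j1 k1 l1 * pdelta (c = 2) i2 j2 k2 l2 * pdelta (c = 3) i3 j3 k3 l3)
   = kd j (Jf c i k) * kd l (Lf c i k)"
  by (cases i; cases j; cases k; cases l) (auto simp: pdelta_def kd_def Jf_def Lf_def)

lemma f_bip_eq:
  "f_bip c U r s t = (\<Sum>i\<in>UNIV. \<Sum>k\<in>UNIV. Wt c U i k (fst r, fst s, fst t)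
      (fst (snd r), fst (snd s), fst (snd t)) (fst (snd (snd r)), fst (snd (snd s)), fst (snd (snd t)))
      (snd (snd (snd r)), snd (snd (snd s)), snd (snd (snd t))))"
proof -
  obtain r1 r2 r3 r4 where r: "r = (r1,r2,r3,r4)" by (cases r) auto
  obtain s1 s2 s3 s4 where s: "s = (s1,s2,s3,s4)" by (cases s) auto
  obtain t1 t2 t3 t4 where t: "t = (t1,t2,t3,t4)" by (cases t) auto
  have "f_bip c U r s t = (\<Sum>i\<in>UNIV. \<Sum>j\<in>UNIV. \<Sum>k\<in>UNIV. \<Sum>l\<in>UNIV. kd j (Jf c i k) * kd l (Lf c i k)
        * U $ i $ (r1,s1,t1) * cnj (U $ j $ (r2,s2,t2)) * U $ k $ (r3,s3,t3) * cnj (U $ l $ (r4,s4,t4)))"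
    unfolding f_bip_def r s t D_eq by simp
  also have "\<dots> = (\<Sum>i\<in>UNIV. \<Sum>k\<in>UNIV. \<Sum>j\<in>UNIV. \<Sum>l\<in>UNIV. kd j (Jf c i k) * kd l (Lf c i k)
        * U $ i $ (r1,s1,t1) * cnj (U $ j $ (r2,s2,t2)) * U $ k $ (r3,s3,t3) * cnj (U $ l $ (r4,s4,t4)))"
    by (rule sum.cong[OF refl], rule sum.swap)
  also have "\<dots> = (\<Sum>i\<in>UNIV. \<Sum>k\<in>UNIV. Wt c U i k (r1,s1,t1) (r2,s2,t2) (r3,s3,t3) (r4,s4,t4))"
    unfolding Wt_def kd_def by (simp add: ifz_mult ifz_mult2 cong: if_cong)
  finally show ?thesis using r s t by simp
qed

lemma reindex4:
  fixes G :: "('a::finite \<times> 'b::finite \<times> 'c::finite) \<Rightarrow> ('a \<times> 'b \<times> 'c) \<Rightarrow> ('a \<times> 'b \<times> 'c) \<Rightarrow> ('a \<times> 'b \<times> 'c) \<Rightarrow> complex"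
  shows "(\<Sum>R4\<in>UNIV. \<Sum>R3\<in>UNIV. \<Sum>R2\<in>UNIV. \<Sum>R1\<in>UNIV. G R1 R2 R3 R4) =
    (\<Sum>r\<in>UNIV. \<Sum>s\<in>UNIV. \<Sum>t\<in>UNIV. G (fst r, fst s, fst t)
      (fst (snd r), fst (snd s), fst (snd t)) (fst (snd (snd r)), fst (snd (snd s)), fst (snd (snd t)))
      (snd (snd (snd r)), snd (snd (snd s)), snd (snd (snd t))))" (is "_ = ?rhs")
proof -
  define g where "g q = G (snd (snd (snd q))) (fst (snd (snd q))) (fst (snd q)) (fst q)" for q :: "('a \<times> 'b \<times> 'c) \<times> ('a \<times> 'b \<times> 'c) \<times> ('a \<times> 'b \<times> 'c) \<times> ('a \<times> 'b \<times> 'c)"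
  define h where "h w = (case w of (r,s,t) \<Rightarrow> G (fst r, fst s, fst t)
      (fst (snd r), fst (snd s), fst (snd t)) (fst (snd (snd r)), fst (snd (snd s)), fst (snd (snd t)))
      (snd (snd (snd r)), snd (snd (snd s)), snd (snd (snd t))))" for w :: "('a \<times> 'a \<times> 'a \<times> 'a) \<times> ('b \<times> 'b \<times> 'b \<times> 'b) \<times> ('c \<times> 'c \<times> 'c \<times> 'c)"
  define jj where "jj q = (case q of ((r4,s4,t4),(r3,s3,t3),(r2,s2,t2),(r1,s1,t1)) \<Rightarrow> ((r1,r2,r3,r4),(s1,s2,s3,s4),(t1,t2,t3,t4)))"
    for q :: "('a \<times> 'b \<times> 'c) \<times> ('a \<times> 'b \<times> 'c) \<times> ('a \<times> 'b \<times> 'c) \<times> ('a \<times> 'b \<times> 'c)"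
  define ii where "ii w = (case w of ((r1,r2,r3,r4),(s1,s2,s3,s4),(t1,t2,t3,t4)) \<Rightarrow> ((r4,s4,t4),(r3,s3,t3),(r2,s2,t2),(r1,s1,t1)))"
    for w :: "('a \<times> 'a \<times> 'a \<times> 'a) \<times> ('b \<times> 'b \<times> 'b \<times> 'b) \<times> ('c \<times> 'c \<times> 'c \<times> 'c)"
  have "(\<Sum>R4\<in>UNIV. \<Sum>R3\<in>UNIV. \<Sum>R2\<in>UNIV. \<Sum>R1\<in>UNIV. G R1 R2 R3 R4) = (\<Sum>q\<in>UNIV. g q)"
    unfolding g_def by (simp add: sum_UNIV_prod)
  also have "\<dots> = (\<Sum>w\<in>UNIV. h w)"
    by (rule sum.reindex_bij_witness[where i=ii and j=jj]) (auto simp: ii_def jj_def g_def h_def split: prod.splits)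
  also have "\<dots> = ?rhs"
    unfolding h_def by (simp add: sum_UNIV_prod)
  finally show ?thesis .
qed

lemma in3: "(\<Sum>x\<in>A. \<Sum>a\<in>B. \<Sum>b\<in>C. \<Sum>c\<in>D. f x a b c) = (\<Sum>a\<in>B. \<Sum>b\<in>C. \<Sum>c\<in>D. \<Sum>x\<in>A. f x a b c)"
  by (subst in2) (rule sum.cong[OF refl], rule sum.cong[OF refl], rule sum.swap)

lemma cp3: "(\<lambda>(x,y,z). F x y z) = (\<lambda>p. F (fst p) (fst (snd p)) (snd (snd p)))"
  by (simp add: fun_eq_iff split_beta)

lemma main_c:
  fixes U :: "complex^('n1::finite \<times> 'n2::finite \<times> 'n3::finite)^('n1 \<times> 'n2 \<times> 'n3)"
    and M1 :: "(complex^'n1) measure" and M2 :: "(complex^'n2) measure"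
    and M3 :: "(complex^'n3) measure"
  assumes h1: "haar_state_measure M1" and h2: "haar_state_measure M2" and h3: "haar_state_measure M3"
    and c: "c \<in> {1,2,3::nat}"
  shows "integrable (M1 \<Otimes>\<^sub>M (M2 \<Otimes>\<^sub>M M3)) (\<lambda>p. tau_bip c (U *v prod_state (fst p) (fst (snd p)) (snd (snd p))))"
    "complex_of_real (eps_bip M1 M2 M3 c U) =
         2 * (1 - (1 / (of_nat CARD('n1) * (of_nat CARD('n1) + 1)))
                  * (1 / (of_nat CARD('n2) * (of_nat CARD('n2) + 1)))
                  * (1 / (of_nat CARD('n3) * (of_nat CARD('n3) + 1)))
                  * (\<Sum>r\<in>UNIV. \<Sum>s\<in>UNIV. \<Sum>t\<in>UNIV.
                       u_vec r * u_vec s * u_vec t * f_bip c U r s t))"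
proof -
  define P where "P = M1 \<Otimes>\<^sub>M (M2 \<Otimes>\<^sub>M M3)"
  define \<psi> where "\<psi> p = U *v prod_state (fst p) (fst (snd p)) (snd (snd p))" for p
  have pP: "prob_space P" unfolding P_def
    using haar_basic h1 h2 h3 prob_space_pair by metis
  have XI: "integrable P (\<lambda>p. Xm (prod_state (fst p) (fst (snd p)) (snd (snd p))) R1 R2 R3 R4)" for R1 R2 R3 R4
    unfolding P_def by (rule Xm_int[OF h1 h2 h3])
  have TE: "Tq c (\<psi> p) = (\<Sum>i\<in>UNIV. \<Sum>k\<in>UNIV. \<Sum>R4\<in>UNIV. \<Sum>R3\<in>UNIV. \<Sum>R2\<in>UNIV. \<Sum>R1\<in>UNIV.
       Wt c U i k R1 R2 R3 R4 * Xm (prod_state (fst p) (fst (snd p)) (snd (snd p))) R1 R2 R3 R4)" for p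
    unfolding \<psi>_def by (rule Tq_expand)
  have TI: "integrable P (\<lambda>p. Tq c (\<psi> p))"
    unfolding TE by (intro Bochner_Integration.integrable_sum) (simp add: XI)
  have TT: "complex_of_real (tau_bip c (\<psi> p)) = 2 * (1 - Tq c (\<psi> p))" for p
    by (rule tau_T[OF c])
  have tauI: "integrable P (\<lambda>p. tau_bip c (\<psi> p))"
  proof -
    have "integrable P (\<lambda>p. Re (2 * (1 - Tq c (\<psi> p))))"
      using pP TI by (intro integrable_Re integrable_mult_right integrable_diff)
        (auto simp: prob_space.finite_measure finite_measure.integrable_const)
    moreover have "Re (2 * (1 - Tq c (\<psi> p))) = tau_bip c (\<psi> p)" for p
      using TT[of p] by (metis Re_complex_of_real)
    ultimately show ?thesis by simp
  qed
  then show "integrable (M1 \<Otimes>\<^sub>M (M2 \<Otimes>\<^sub>M M3)) (\<lambda>p. tau_bip c (U *v prod_state (fst p) (fst (snd p)) (snd (snd p))))"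
    unfolding P_def \<psi>_def .
  have "complex_of_real (eps_bip M1 M2 M3 c U) = complex_of_real (\<integral>p. tau_bip c (\<psi> p) \<partial>P)"
    unfolding eps_bip_def cp3 P_def \<psi>_def ..
  also have "\<dots> = (\<integral>p. 2 * (1 - Tq c (\<psi> p)) \<partial>P)"
    by (simp only: integral_complex_of_real[symmetric] TT)
  also have "\<dots> = 2 * (1 - (\<integral>p. Tq c (\<psi> p) \<partial>P))"
    using pP TI by (simp add: integral_diff prob_space.prob_space prob_space.finite_measure finite_measure.integrable_const)
  finally have E1: "complex_of_real (eps_bip M1 M2 M3 c U) = 2 * (1 - (\<integral>p. Tq c (\<psi> p) \<partial>P))" .
  define D1 where "D1 = (of_nat CARD('n1) * (of_nat CARD('n1) + 1) :: complex)"
  define D2 where "D2 = (of_nat CARD('n2) * (of_nat CARD('n2) + 1) :: complex)"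
  define D3 where "D3 = (of_nat CARD('n3) * (of_nat CARD('n3) + 1) :: complex)"
  have "(\<integral>p. Tq c (\<psi> p) \<partial>P) = (\<Sum>i\<in>UNIV. \<Sum>k\<in>UNIV. \<Sum>R4\<in>UNIV. \<Sum>R3\<in>UNIV. \<Sum>R2\<in>UNIV. \<Sum>R1\<in>UNIV.
       Wt c U i k R1 R2 R3 R4 * (mom M1 (fst R1) (fst R2) (fst R3) (fst R4) * mom M2 (fst (snd R1)) (fst (snd R2)) (fst (snd R3)) (fst (snd R4))
      * mom M3 (snd (snd R1)) (snd (snd R2)) (snd (snd R3)) (snd (snd R4))))"
    unfolding TE using XI by (simp add: Xm_int(2)[OF h1 h2 h3, folded P_def])
  also have "\<dots> = (\<Sum>i\<in>UNIV. \<Sum>k\<in>UNIV. \<Sum>R4\<in>UNIV. \<Sum>R3\<in>UNIV. \<Sum>R2\<in>UNIV. \<Sum>R1\<in>UNIV.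
       Wt c U i k R1 R2 R3 R4 * (u_vec (fst R1, fst R2, fst R3, fst R4) / D1 * (u_vec (fst (snd R1), fst (snd R2), fst (snd R3), fst (snd R4)) / D2)
      * (u_vec (snd (snd R1), snd (snd R2), snd (snd R3), snd (snd R4)) / D3)))"
    unfolding D1_def D2_def D3_def by (simp only: mom_formula[OF h1] mom_formula[OF h2] mom_formula[OF h3])
  also have "\<dots> = (\<Sum>i\<in>UNIV. \<Sum>k\<in>UNIV. \<Sum>r\<in>UNIV. \<Sum>s\<in>UNIV. \<Sum>t\<in>UNIV.
       Wt c U i k (fst r, fst s, fst t)
      (fst (snd r), fst (snd s), fst (snd t)) (fst (snd (snd r)), fst (snd (snd s)), fst (snd (snd t)))
      (snd (snd (snd r)), snd (snd (snd s)), snd (snd (snd t))) * (u_vec r / D1 * (u_vec s / D2) * (u_vec t / D3)))"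
    by (simp only: reindex4) simp
  also have "\<dots> = (\<Sum>i\<in>UNIV. \<Sum>r\<in>UNIV. \<Sum>s\<in>UNIV. \<Sum>t\<in>UNIV. \<Sum>k\<in>UNIV.
       Wt c U i k (fst r, fst s, fst t)
      (fst (snd r), fst (snd s), fst (snd t)) (fst (snd (snd r)), fst (snd (snd s)), fst (snd (snd t)))
      (snd (snd (snd r)), snd (snd (snd s)), snd (snd (snd t))) * (u_vec r / D1 * (u_vec s / D2) * (u_vec t / D3)))"
    by (rule sum.cong[OF refl], rule in3)
  also have "\<dots> = (\<Sum>r\<in>UNIV. \<Sum>s\<in>UNIV. \<Sum>t\<in>UNIV. \<Sum>i\<in>UNIV. \<Sum>k\<in>UNIV.
       Wt c U i k (fst r, fst s, fst t)
      (fst (snd r), fst (snd s), fst (snd t)) (fst (snd (snd r)), fst (snd (snd s)), fst (snd (snd t)))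
      (snd (snd (snd r)), snd (snd (snd s)), snd (snd (snd t))) * (u_vec r / D1 * (u_vec s / D2) * (u_vec t / D3)))"
    by (rule in3)
  also have "\<dots> = 1 / D1 * (1 / D2) * (1 / D3) * (\<Sum>r\<in>UNIV. \<Sum>s\<in>UNIV. \<Sum>t\<in>UNIV.
                       u_vec r * u_vec s * u_vec t * f_bip c U r s t)"
    by (simp add: f_bip_eq sum_distrib_left sum_distrib_right ac_simps)
  finally show "complex_of_real (eps_bip M1 M2 M3 c U) =
         2 * (1 - (1 / (of_nat CARD('n1) * (of_nat CARD('n1) + 1)))
                  * (1 / (of_nat CARD('n2) * (of_nat CARD('n2) + 1)))
                  * (1 / (of_nat CARD('n3) * (of_nat CARD('n3) + 1)))
                  * (\<Sum>r\<in>UNIV. \<Sum>s\<in>UNIV. \<Sum>t\<in>UNIV.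
                       u_vec r * u_vec s * u_vec t * f_bip c U r s t))"
    unfolding E1 D1_def D2_def D3_def by simp
qed

theorem lemma1:
  fixes U :: "complex^('n1::finite \<times> 'n2::finite \<times> 'n3::finite)^('n1 \<times> 'n2 \<times> 'n3)"
    and M1 :: "(complex^'n1) measure" and M2 :: "(complex^'n2) measure"
    and M3 :: "(complex^'n3) measure"
  assumes "special_unitary U"
    and "haar_state_measure M1" and "haar_state_measure M2" and "haar_state_measure M3"
  shows "eps_one M1 M2 M3 U = (eps_bip M1 M2 M3 3 U + eps_bip M1 M2 M3 2 U + eps_bip M1 M2 M3 1 U) / 3
    \<and> (\<forall>c\<in>{1,2,3::nat}.
         complex_of_real (eps_bip M1 M2 M3 c U) =
         2 * (1 - (1 / (of_nat CARD('n1) * (of_nat CARD('n1) + 1)))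
                  * (1 / (of_nat CARD('n2) * (of_nat CARD('n2) + 1)))
                  * (1 / (of_nat CARD('n3) * (of_nat CARD('n3) + 1)))
                  * (\<Sum>r\<in>UNIV. \<Sum>s\<in>UNIV. \<Sum>t\<in>UNIV.
                       u_vec r * u_vec s * u_vec t * f_bip c U r s t)))"
proof
  note I = main_c(1)[OF assms(2,3,4), of _ U]
  have "eps_one M1 M2 M3 U = (\<integral>p. (tau_bip 3 (U *v prod_state (fst p) (fst (snd p)) (snd (snd p)))
        + tau_bip 2 (U *v prod_state (fst p) (fst (snd p)) (snd (snd p)))
        + tau_bip 1 (U *v prod_state (fst p) (fst (snd p)) (snd (snd p)))) / 3 \<partial>(M1 \<Otimes>\<^sub>M (M2 \<Otimes>\<^sub>M M3)))"
    unfolding eps_one_def cp3 one_tangle_def ..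
  also have "\<dots> = (eps_bip M1 M2 M3 3 U + eps_bip M1 M2 M3 2 U + eps_bip M1 M2 M3 1 U) / 3"
    unfolding eps_bip_def cp3
    using I[of 1] I[of 2] I[of 3] by simp
  finally show "eps_one M1 M2 M3 U = (eps_bip M1 M2 M3 3 U + eps_bip M1 M2 M3 2 U + eps_bip M1 M2 M3 1 U) / 3" .
  show "\<forall>c\<in>{1,2,3::nat}.
         complex_of_real (eps_bip M1 M2 M3 c U) =
         2 * (1 - (1 / (of_nat CARD('n1) * (of_nat CARD('n1) + 1)))
                  * (1 / (of_nat CARD('n2) * (of_nat CARD('n2) + 1)))
                  * (1 / (of_nat CARD('n3) * (of_nat CARD('n3) + 1)))
                  * (\<Sum>r\<in>UNIV. \<Sum>s\<in>UNIV. \<Sum>t\<in>UNIV.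
                       u_vec r * u_vec s * u_vec t * f_bip c U r s t))"
    using main_c(2)[OF assms(2,3,4)] by blast
qed

end
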